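(* Let $G$ be a finite group with identity $e$ and let $S\subseteq G\setminus\{e\}$ with $|S|=k\le 4$, such that some ordering of the elements of $S$ has product different from $e$. Suppose $S$ is not of either of the following forms: (i) $|S|=4$ and $S=\{x,x^{-1},y,z\}$ for elements with $xyz=x^{-1}zy=e$; (ii) $|S|=4$ and $S=\{w,x,y,z\}$ for elements with $wxy=wyz=wzx=xzy=e$. Then there is an ordering of the elements of $S$ whose partial products are pairwise distinct, i.e. $G$ has an $S$-sequencing.
   Context: For a group $G$ with identity $e$ and a set $S\subseteq G\setminus\{e\}$ with $|S|=k$, an $S$-sequencing of $G$ is an ordering $(g_1,\dots,g_k)$ of the elements of $S$ (each used exactly once) such that the partial products $h_0=e$, $h_i=g_1g_2\cdots g_i$ ($1\le i\le k$) are pairwise distinct. *)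

theory Defs
  imports "HOL-Algebra.Group"
begin

definition list_prod :: "('a, 'b) monoid_scheme \<Rightarrow> 'a list \<Rightarrow> 'a" where
  "list_prod G gs = foldl (\<lambda>a b. a \<otimes>\<^bsub>G\<^esub> b) \<one>\<^bsub>G\<^esub> gs"

definition is_ordering :: "'a set \<Rightarrow> 'a list \<Rightarrow> bool" where
  "is_ordering S gs \<longleftrightarrow> distinct gs \<and> set gs = S"

definition is_S_sequencing :: "('a, 'b) monoid_scheme \<Rightarrow> 'a set \<Rightarrow> 'a list \<Rightarrow> bool" where
  "is_S_sequencing G S gs \<longleftrightarrow> is_ordering S gs \<and>
     inj_on (\<lambda>i. list_prod G (take i gs)) {0..length gs}"

end

theory Submission
  imports Defs
begin

definition good4 :: "('a, 'b) monoid_scheme \<Rightarrow> 'a \<Rightarrow> 'a \<Rightarrow> 'a \<Rightarrow> 'a \<Rightarrow> bool" where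
  "good4 G p q r s \<longleftrightarrow> p \<otimes>\<^bsub>G\<^esub> q \<noteq> \<one>\<^bsub>G\<^esub> \<and> q \<otimes>\<^bsub>G\<^esub> r \<noteq> \<one>\<^bsub>G\<^esub> \<and> r \<otimes>\<^bsub>G\<^esub> s \<noteq> \<one>\<^bsub>G\<^esub>
     \<and> p \<otimes>\<^bsub>G\<^esub> q \<otimes>\<^bsub>G\<^esub> r \<noteq> \<one>\<^bsub>G\<^esub> \<and> q \<otimes>\<^bsub>G\<^esub> r \<otimes>\<^bsub>G\<^esub> s \<noteq> \<one>\<^bsub>G\<^esub>
     \<and> p \<otimes>\<^bsub>G\<^esub> q \<otimes>\<^bsub>G\<^esub> r \<otimes>\<^bsub>G\<^esub> s \<noteq> \<one>\<^bsub>G\<^esub>"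

definition GOODS :: "('a, 'b) monoid_scheme \<Rightarrow> 'a set \<Rightarrow> bool" where
  "GOODS G S \<longleftrightarrow> (\<exists>p q r s. {p,q,r,s} = S \<and> good4 G p q r s)"

definition E1 :: "('a, 'b) monoid_scheme \<Rightarrow> 'a set \<Rightarrow> bool" where
  "E1 G S \<longleftrightarrow> (\<exists>x\<in>carrier G. \<exists>y\<in>carrier G. \<exists>z\<in>carrier G.
               S = {x, inv\<^bsub>G\<^esub> x, y, z} \<and> x \<otimes>\<^bsub>G\<^esub> y \<otimes>\<^bsub>G\<^esub> z = \<one>\<^bsub>G\<^esub> \<and> inv\<^bsub>G\<^esub> x \<otimes>\<^bsub>G\<^esub> z \<otimes>\<^bsub>G\<^esub> y = \<one>\<^bsub>G\<^esub>)"

definition E2 :: "('a, 'b) monoid_scheme \<Rightarrow> 'a set \<Rightarrow> bool" where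
  "E2 G S \<longleftrightarrow> (\<exists>w\<in>carrier G. \<exists>x\<in>carrier G. \<exists>y\<in>carrier G. \<exists>z\<in>carrier G.
               S = {w, x, y, z} \<and> w \<otimes>\<^bsub>G\<^esub> x \<otimes>\<^bsub>G\<^esub> y = \<one>\<^bsub>G\<^esub> \<and> w \<otimes>\<^bsub>G\<^esub> y \<otimes>\<^bsub>G\<^esub> z = \<one>\<^bsub>G\<^esub>
               \<and> w \<otimes>\<^bsub>G\<^esub> z \<otimes>\<^bsub>G\<^esub> x = \<one>\<^bsub>G\<^esub> \<and> x \<otimes>\<^bsub>G\<^esub> z \<otimes>\<^bsub>G\<^esub> y = \<one>\<^bsub>G\<^esub>)"

lemma GOODS_I: "good4 G p q r s \<Longrightarrow> {p,q,r,s} = S \<Longrightarrow> GOODS G S"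
  unfolding GOODS_def by blast

context group begin

lemma one_iff: assumes "x \<in> carrier G" "y \<in> carrier G" shows "x \<otimes> y = \<one> \<longleftrightarrow> y = inv x"
proof
  assume "x \<otimes> y = \<one>"
  then have "y \<otimes> x = \<one>" using inv_comm assms by blast
  then show "y = inv x" using inv_equality[of y x] assms by simp
next
  assume "y = inv x" then show "x \<otimes> y = \<one>" using assms by simp
qed

lemma one_iff2: assumes "x \<in> carrier G" "y \<in> carrier G" shows "x \<otimes> y = \<one> \<longleftrightarrow> x = inv y"
proof
  assume "x \<otimes> y = \<one>"
  then show "x = inv y" using inv_equality[of x y] assms by simp
next
  assume "x = inv y" then show "x \<otimes> y = \<one>" using assms by simp
qed

lemma cyc3: assumes "x \<in> carrier G" "y \<in> carrier G" "z \<in> carrier G" "x \<otimes> y \<otimes> z = \<one>"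
  shows "y \<otimes> z \<otimes> x = \<one>"
proof -
  have "x \<otimes> (y \<otimes> z) = \<one>" using assms by (simp add: m_assoc)
  then show ?thesis using inv_comm[of x "y \<otimes> z"] assms by simp
qed

lemma cyc4: assumes "x \<in> carrier G" "y \<in> carrier G" "z \<in> carrier G" "w \<in> carrier G"
   "x \<otimes> y \<otimes> z \<otimes> w \<noteq> \<one>" shows "y \<otimes> z \<otimes> w \<otimes> x \<noteq> \<one>"
proof
  assume "y \<otimes> z \<otimes> w \<otimes> x = \<one>"
  then have "x \<otimes> (y \<otimes> z \<otimes> w) = \<one>" using inv_comm[of "y \<otimes> z \<otimes> w" x] assms by simp
  then show False using assms(5) assms by (simp add: m_assoc)
qed

lemma canc1: "x \<in> carrier G \<Longrightarrow> y \<in> carrier G \<Longrightarrow> x \<otimes> (inv x \<otimes> y) = y"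
  by (simp add: m_assoc[symmetric])
lemma canc2: "x \<in> carrier G \<Longrightarrow> y \<in> carrier G \<Longrightarrow> inv x \<otimes> (x \<otimes> y) = y"
  by (simp add: m_assoc[symmetric])

lemma t1: assumes "a \<in> carrier G" "c \<in> carrier G" "d \<in> carrier G" "c \<otimes> d \<noteq> inv a"
  shows "c \<otimes> d \<otimes> a \<noteq> \<one>"
  using one_iff2[of "c \<otimes> d" a] assms by simp
lemma t2: assumes "a \<in> carrier G" "c \<in> carrier G" "d \<in> carrier G" "c \<otimes> d \<noteq> a"
  shows "inv a \<otimes> c \<otimes> d \<noteq> \<one>"
proof
  assume "inv a \<otimes> c \<otimes> d = \<one>"
  then have "inv a \<otimes> (c \<otimes> d) = \<one>" using assms by (simp add: m_assoc)
  then have "c \<otimes> d = inv (inv a)" using one_iff[of "inv a" "c \<otimes> d"] assms by simp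
  then show False using assms by simp
qed
lemma t3: assumes "a \<in> carrier G" "c \<in> carrier G" "d \<in> carrier G" "c \<otimes> d = a" "a \<noteq> \<one>"
  shows "c \<otimes> a \<otimes> d \<otimes> inv a \<noteq> \<one>"
proof
  assume "c \<otimes> a \<otimes> d \<otimes> inv a = \<one>"
  then have 1: "c \<otimes> a \<otimes> d = inv (inv a)" using one_iff2[of "c \<otimes> a \<otimes> d" "inv a"] assms by simp
  have dd: "d = inv c \<otimes> a" using assms inv_solve_left by blast
  have "c \<otimes> a \<otimes> inv c \<otimes> a = \<one> \<otimes> a" using 1 assms dd by (simp add: m_assoc)
  then have "c \<otimes> a \<otimes> inv c = \<one>" using assms by (simp del: r_one l_one)
  then have "c \<otimes> a = inv (inv c)" using one_iff2[of "c \<otimes> a" "inv c"] assms by simp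
  then show False using assms by simp
qed
lemma t4: assumes "a \<in> carrier G" "d \<in> carrier G" "d \<noteq> \<one>"
  shows "a \<otimes> d \<otimes> inv a \<noteq> \<one>"
proof
  assume "a \<otimes> d \<otimes> inv a = \<one>"
  then have "a \<otimes> d = inv (inv a)" using one_iff2[of "a \<otimes> d" "inv a"] assms by simp
  then show False using assms by simp
qed
lemma t5: assumes "a \<in> carrier G" "d \<in> carrier G" "d \<noteq> \<one>"
  shows "inv a \<otimes> d \<otimes> a \<noteq> \<one>"
  using t4[of "inv a" d] assms by simp
lemma ne1: "x \<in> carrier G \<Longrightarrow> y \<in> carrier G \<Longrightarrow> y \<noteq> inv x \<Longrightarrow> x \<otimes> y \<noteq> \<one>"
  using one_iff by blast

lemma caseI_sub:
  assumes C: "x \<in> carrier G" "y \<in> carrier G" "c \<in> carrier G" "d \<in> carrier G"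
    and N: "x \<noteq> \<one>" "y \<noteq> \<one>" "c \<noteq> \<one>" "d \<noteq> \<one>" and D: "distinct [x,y,c,d]"
    and B: "y = inv x" and X: "c \<otimes> d = x"
  shows "GOODS G {x,y,c,d} \<or> E1 G {x,y,c,d}"
proof (cases "x \<otimes> d \<otimes> c = \<one>")
  case True
  have "E1 G {x,y,c,d}" unfolding E1_def
  proof (intro bexI conjI)
    show "{x,y,c,d} = {x, inv x, d, c}" using B by auto
    show "x \<otimes> d \<otimes> c = \<one>" by (fact True)
    show "inv x \<otimes> c \<otimes> d = \<one>" using C X by (simp add: m_assoc)
  qed (use C in auto)
  then show ?thesis by simp
next
  case False
  have xi: "x = inv y" using B C by simp
  have "good4 G c x d y"
    unfolding good4_def
  proof (intro conjI)
    show "c \<otimes> x \<noteq> \<one>" using C D xi one_iff2[of c x] by auto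
    show "x \<otimes> d \<noteq> \<one>" using C D B one_iff[of x d] by auto
    show "d \<otimes> y \<noteq> \<one>" using C D xi one_iff2[of d y] by auto
    show "c \<otimes> x \<otimes> d \<noteq> \<one>" using C False cyc3[of c x d] by blast
    show "x \<otimes> d \<otimes> y \<noteq> \<one>" using t4[of x d] C N B by simp
    show "c \<otimes> x \<otimes> d \<otimes> y \<noteq> \<one>" using t3[of x c d] C N B X by simp
  qed
  then have "GOODS G {x,y,c,d}" by (rule GOODS_I) auto
  then show ?thesis ..
qed

lemma caseI:
  assumes C: "a \<in> carrier G" "b \<in> carrier G" "c \<in> carrier G" "d \<in> carrier G"
    and N: "a \<noteq> \<one>" "b \<noteq> \<one>" "c \<noteq> \<one>" "d \<noteq> \<one>" and D: "distinct [a,b,c,d]"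
    and B: "b = inv a" and P: "a \<otimes> b \<otimes> c \<otimes> d \<noteq> \<one>"
  shows "GOODS G {a,b,c,d} \<or> E1 G {a,b,c,d}"
proof -
  have cd: "c \<otimes> d \<noteq> \<one>" using P C B by (simp add: m_assoc[symmetric])
  consider "c \<otimes> d \<noteq> a \<and> c \<otimes> d \<noteq> b" | "c \<otimes> d = a" | "c \<otimes> d = b" by blast
  then show ?thesis
  proof cases
    case 1
    have "good4 G b c d a"
      unfolding good4_def
    proof (intro conjI)
      show "b \<otimes> c \<noteq> \<one>" using C D B one_iff[of b c] by auto
      show "c \<otimes> d \<noteq> \<one>" by (fact cd)
      show "d \<otimes> a \<noteq> \<one>" using C D B one_iff2[of d a] by auto
      show "b \<otimes> c \<otimes> d \<noteq> \<one>" using t2[of a c d] C B 1 by simp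
      show "c \<otimes> d \<otimes> a \<noteq> \<one>" using t1[of a c d] C B 1 by simp
      show "b \<otimes> c \<otimes> d \<otimes> a \<noteq> \<one>" using cyc4[OF C P] .
    qed
    then have "GOODS G {a,b,c,d}" by (rule GOODS_I) auto
    then show ?thesis ..
  next
    case 2
    show ?thesis using caseI_sub[OF C N D B 2] .
  next
    case 3
    have "GOODS G {b,a,c,d} \<or> E1 G {b,a,c,d}"
      apply (rule caseI_sub)
      using C N D B 3 by auto
    moreover have "{b,a,c,d} = {a,b,c,d}" by auto
    ultimately show ?thesis by simp
  qed
qed

lemma seq4:
  assumes "p \<in> carrier G" "q \<in> carrier G" "r \<in> carrier G" "s \<in> carrier G"
    "p \<noteq> \<one>" "q \<noteq> \<one>" "r \<noteq> \<one>" "s \<noteq> \<one>" "distinct [p,q,r,s]" "good4 G p q r s"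
  shows "is_S_sequencing G {p,q,r,s} [p,q,r,s]"
proof -
  have e: "{0..length [p,q,r,s]} = {0,1,2,3,4::nat}" by auto
  have "inj_on (\<lambda>i. list_prod G (take i [p,q,r,s])) {0,1,2,3,4::nat}"
    using assms unfolding inj_on_def good4_def list_prod_def
    by (auto simp: m_assoc dest: sym)
  then show ?thesis using assms(9) unfolding is_S_sequencing_def is_ordering_def e by auto
qed

lemma ncyc3: assumes "x \<in> carrier G" "y \<in> carrier G" "z \<in> carrier G" "x \<otimes> y \<otimes> z \<noteq> \<one>"
  shows "y \<otimes> z \<otimes> x \<noteq> \<one>"
  using assms cyc3[of y z x] cyc3[of z x y] by blast

lemma ncomm: "x \<in> carrier G \<Longrightarrow> y \<in> carrier G \<Longrightarrow> x \<otimes> y \<noteq> \<one> \<Longrightarrow> y \<otimes> x \<noteq> \<one>"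
  using inv_comm by blast

lemma caseII:
  assumes C: "a \<in> carrier G" "b \<in> carrier G" "c \<in> carrier G" "d \<in> carrier G"
    and N: "a \<noteq> \<one>" "b \<noteq> \<one>" "c \<noteq> \<one>" "d \<noteq> \<one>" and D: "distinct [a,b,c,d]"
    and P: "a \<otimes> b \<otimes> c \<otimes> d \<noteq> \<one>"
    and ab: "a \<otimes> b \<noteq> \<one>" and bc: "b \<otimes> c \<noteq> \<one>" and cd: "c \<otimes> d \<noteq> \<one>" and da: "d \<otimes> a \<noteq> \<one>"
    and T1: "a \<otimes> b \<otimes> c = \<one>" and T3: "c \<otimes> d \<otimes> a = \<one>"
  shows "GOODS G {a,b,c,d} \<or> E1 G {a,b,c,d} \<or> E2 G {a,b,c,d}"
proof -
  have ac: "a \<otimes> c \<noteq> \<one>"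
  proof
    assume "a \<otimes> c = \<one>"
    then have "c = inv a" using one_iff C by blast
    then show False using T1 t4[of a b] C N by simp
  qed
  have cdi: "c \<otimes> d = inv a" using one_iff2[of "c \<otimes> d" a] T3 C by simp
  have T3': "a \<otimes> c \<otimes> d = \<one>" using cyc3[of c d a] cyc3[of d a c] T3 C by simp
  show ?thesis
  proof (cases "b \<otimes> d = \<one>")
    case True
    have dd: "d = inv b" using one_iff True C by blast
    have "b \<otimes> d \<otimes> a \<otimes> c = a \<otimes> c" using True C by simp
    then have "GOODS G {b,d,a,c} \<or> E1 G {b,d,a,c}"
      using caseI[of b d a c] C N D dd ac by auto
    moreover have "{b,d,a,c} = {a,b,c,d}" by auto
    ultimately have "GOODS G {a,b,c,d} \<or> E1 G {a,b,c,d}" by simp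
    then show ?thesis by blast
  next
    case bd: False
    show ?thesis
    proof (cases "a \<otimes> d \<otimes> b = \<one>")
      case False
      have "good4 G c d b a"
        unfolding good4_def
      proof (intro conjI)
        show "c \<otimes> d \<noteq> \<one>" by (fact cd)
        show "d \<otimes> b \<noteq> \<one>" using ncomm[of b d] bd C by blast
        show "b \<otimes> a \<noteq> \<one>" using ncomm[of a b] ab C by blast
        show "c \<otimes> d \<otimes> b \<noteq> \<one>" using cdi one_iff[of "inv a" b] C D by auto
        show "d \<otimes> b \<otimes> a \<noteq> \<one>" using ncyc3[of a d b] ncyc3[of d b a] False C by blast
        show "c \<otimes> d \<otimes> b \<otimes> a \<noteq> \<one>" using cdi t5[of a b] C N by simp
      qed
      then have "GOODS G {a,b,c,d}" by (rule GOODS_I) auto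
      then show ?thesis ..
    next
      case T4: True
      show ?thesis
      proof (cases "b \<otimes> d \<otimes> c = \<one>")
        case False
        have "good4 G a c b d"
          unfolding good4_def
        proof (intro conjI)
          show "a \<otimes> c \<noteq> \<one>" by (fact ac)
          show "c \<otimes> b \<noteq> \<one>" using ncomm[of b c] bc C by blast
          show "b \<otimes> d \<noteq> \<one>" by (fact bd)
          show "a \<otimes> c \<otimes> b \<noteq> \<one>"
          proof
            assume "a \<otimes> c \<otimes> b = \<one>"
            then have "a \<otimes> (c \<otimes> b) = \<one>" using C by (simp add: m_assoc)
            then have 1: "c \<otimes> b = inv a" using one_iff C by blast
            have "a \<otimes> (d \<otimes> b) = \<one>" using T4 C by (simp add: m_assoc)
            then have 2: "d \<otimes> b = inv a" using one_iff C by blast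
            from 1 2 have "c \<otimes> b = d \<otimes> b" by simp
            then have "c = d" using C by simp
            then show False using D by simp
          qed
          show "c \<otimes> b \<otimes> d \<noteq> \<one>" using ncyc3[of b d c] ncyc3[of d c b] False C by blast
          show "a \<otimes> c \<otimes> b \<otimes> d \<noteq> \<one>"
          proof -
            have "a \<otimes> c = inv d" using one_iff2[of "a \<otimes> c" d] T3' C by simp
            then show ?thesis using t5[of d b] C N by simp
          qed
        qed
        then have "GOODS G {a,b,c,d}" by (rule GOODS_I) auto
        then show ?thesis ..
      next
        case True
        have "E2 G {a,b,c,d}" unfolding E2_def
          using C T1 T3' T4 True by blast
        then show ?thesis by simp
      qed
    qed
  qed
qed

lemma main4:
  assumes C: "a \<in> carrier G" "b \<in> carrier G" "c \<in> carrier G" "d \<in> carrier G"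
    and N: "a \<noteq> \<one>" "b \<noteq> \<one>" "c \<noteq> \<one>" "d \<noteq> \<one>" and D: "distinct [a,b,c,d]"
    and P: "a \<otimes> b \<otimes> c \<otimes> d \<noteq> \<one>"
  shows "GOODS G {a,b,c,d} \<or> E1 G {a,b,c,d} \<or> E2 G {a,b,c,d}"
proof -
  have P2: "b \<otimes> c \<otimes> d \<otimes> a \<noteq> \<one>" using cyc4 C P by blast
  have P3: "c \<otimes> d \<otimes> a \<otimes> b \<noteq> \<one>" using cyc4 C P2 by blast
  have P4: "d \<otimes> a \<otimes> b \<otimes> c \<noteq> \<one>" using cyc4 C P3 by blast
  have s2: "{b,c,d,a} = {a,b,c,d}" by auto
  have s3: "{c,d,a,b} = {a,b,c,d}" by auto
  have s4: "{d,a,b,c} = {a,b,c,d}" by auto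
  show ?thesis
  proof (cases "a \<otimes> b = \<one>")
    case True
    then show ?thesis using caseI[OF C N D _ P] one_iff C by blast
  next
    case ab: False
    show ?thesis
    proof (cases "b \<otimes> c = \<one>")
      case True
      then have "GOODS G {b,c,d,a} \<or> E1 G {b,c,d,a}"
        using caseI[of b c d a] C N D P2 one_iff by auto
      then show ?thesis unfolding s2 by blast
    next
      case bc: False
      show ?thesis
      proof (cases "c \<otimes> d = \<one>")
        case True
        then have "GOODS G {c,d,a,b} \<or> E1 G {c,d,a,b}"
          using caseI[of c d a b] C N D P3 one_iff by auto
        then show ?thesis unfolding s3 by blast
      next
        case cd: False
        show ?thesis
        proof (cases "d \<otimes> a = \<one>")
          case True
          then have "GOODS G {d,a,b,c} \<or> E1 G {d,a,b,c}"
            using caseI[of d a b c] C N D P4 one_iff by auto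
          then show ?thesis unfolding s4 by blast
        next
          case da: False
          show ?thesis
          proof (cases "good4 G a b c d \<or> good4 G b c d a \<or> good4 G c d a b \<or> good4 G d a b c")
            case True
            then have "GOODS G {a,b,c,d}"
              using GOODS_I[of G a b c d] GOODS_I[of G b c d a] GOODS_I[of G c d a b]
                GOODS_I[of G d a b c] s2 s3 s4 by blast
            then show ?thesis ..
          next
            case False
            then have "(a \<otimes> b \<otimes> c = \<one> \<or> b \<otimes> c \<otimes> d = \<one>) \<and> (b \<otimes> c \<otimes> d = \<one> \<or> c \<otimes> d \<otimes> a = \<one>)
              \<and> (c \<otimes> d \<otimes> a = \<one> \<or> d \<otimes> a \<otimes> b = \<one>) \<and> (d \<otimes> a \<otimes> b = \<one> \<or> a \<otimes> b \<otimes> c = \<one>)"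
              unfolding good4_def using ab bc cd da P P2 P3 P4 by blast
            then consider "a \<otimes> b \<otimes> c = \<one> \<and> c \<otimes> d \<otimes> a = \<one>" | "b \<otimes> c \<otimes> d = \<one> \<and> d \<otimes> a \<otimes> b = \<one>"
              by blast
            then show ?thesis
            proof cases
              case 1
              then show ?thesis using caseII[OF C N D P ab bc cd da] by blast
            next
              case 2
              then have "GOODS G {b,c,d,a} \<or> E1 G {b,c,d,a} \<or> E2 G {b,c,d,a}"
                using caseII[of b c d a] C N D P2 ab bc cd da by auto
              then show ?thesis unfolding s2 .
            qed
          qed
        qed
      qed
    qed
  qed
qed

lemma seq3:
  assumes "p \<in> carrier G" "q \<in> carrier G" "r \<in> carrier G"
    "p \<noteq> \<one>" "q \<noteq> \<one>" "r \<noteq> \<one>" "distinct [p,q,r]"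
    "p \<otimes> q \<noteq> \<one>" "q \<otimes> r \<noteq> \<one>" "p \<otimes> q \<otimes> r \<noteq> \<one>"
  shows "is_S_sequencing G {p,q,r} [p,q,r]"
proof -
  have e: "{0..length [p,q,r]} = {0,1,2,3::nat}" by auto
  have "inj_on (\<lambda>i. list_prod G (take i [p,q,r])) {0,1,2,3::nat}"
    using assms unfolding inj_on_def list_prod_def
    by (auto simp: m_assoc dest: sym)
  then show ?thesis using assms(7) unfolding is_S_sequencing_def is_ordering_def e by auto
qed

lemma seq2:
  assumes "p \<in> carrier G" "q \<in> carrier G"
    "p \<noteq> \<one>" "q \<noteq> \<one>" "distinct [p,q]" "p \<otimes> q \<noteq> \<one>"
  shows "is_S_sequencing G {p,q} [p,q]"
proof -
  have e: "{0..length [p,q]} = {0,1,2::nat}" by auto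
  have "inj_on (\<lambda>i. list_prod G (take i [p,q])) {0,1,2::nat}"
    using assms unfolding inj_on_def list_prod_def
    by (auto simp: m_assoc dest: sym)
  then show ?thesis using assms(5) unfolding is_S_sequencing_def is_ordering_def e by auto
qed

lemma seq1:
  assumes "p \<in> carrier G" "p \<noteq> \<one>"
  shows "is_S_sequencing G {p} [p]"
proof -
  have e: "{0..length [p]} = {0,1::nat}" by auto
  have "inj_on (\<lambda>i. list_prod G (take i [p])) {0,1::nat}"
    using assms unfolding inj_on_def list_prod_def
    by (auto dest: sym)
  then show ?thesis unfolding is_S_sequencing_def is_ordering_def e by auto
qed

lemma three:
  assumes C: "p \<in> carrier G" "q \<in> carrier G" "r \<in> carrier G"
    and N: "p \<noteq> \<one>" "q \<noteq> \<one>" "r \<noteq> \<one>" and D: "distinct [p,q,r]"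
    and P: "p \<otimes> q \<otimes> r \<noteq> \<one>"
  shows "\<exists>gs. is_S_sequencing G {p,q,r} gs"
proof -
  have P2: "q \<otimes> r \<otimes> p \<noteq> \<one>" using ncyc3 C P by blast
  have P3: "r \<otimes> p \<otimes> q \<noteq> \<one>" using ncyc3 C P2 by blast
  consider "p \<otimes> q \<noteq> \<one> \<and> q \<otimes> r \<noteq> \<one>" | "p \<otimes> q = \<one>" | "p \<otimes> q \<noteq> \<one> \<and> q \<otimes> r = \<one>" by blast
  then show ?thesis
  proof cases
    case 1
    then show ?thesis using seq3[OF C N D] P by blast
  next
    case 2
    then have qq: "q = inv p" using one_iff C by blast
    have "q \<otimes> r \<noteq> \<one>" using qq one_iff[of q r] C D by auto
    moreover have "r \<otimes> p \<noteq> \<one>" using qq one_iff2[of r p] C D by auto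
    ultimately have "is_S_sequencing G {q,r,p} [q,r,p]" using seq3[of q r p] C N D P2 by auto
    moreover have "{q,r,p} = {p,q,r}" by auto
    ultimately show ?thesis by auto
  next
    case 3
    then have rr: "r = inv q" using one_iff C by blast
    have "r \<otimes> p \<noteq> \<one>" using rr one_iff[of r p] C D by auto
    then have "is_S_sequencing G {r,p,q} [r,p,q]" using seq3[of r p q] C N D P3 3 by auto
    moreover have "{r,p,q} = {p,q,r}" by auto
    ultimately show ?thesis by auto
  qed
qed

end

lemma list_cases4: "length xs \<le> 4 \<Longrightarrow> xs = [] \<or> (\<exists>p. xs = [p]) \<or> (\<exists>p q. xs = [p,q])
   \<or> (\<exists>p q r. xs = [p,q,r]) \<or> (\<exists>p q r s. xs = [p,q,r,s])"
proof -
  assume "length xs \<le> 4"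
  then have "length xs = 0 \<or> length xs = Suc 0 \<or> length xs = Suc (Suc 0) \<or> length xs = Suc (Suc (Suc 0))
     \<or> length xs = Suc (Suc (Suc (Suc 0)))" by arith
  then show ?thesis by (auto simp: length_Suc_conv)
qed

lemma card4_distinct: "card {p,q,r,s} = 4 \<Longrightarrow> distinct [p,q,r,s]"
  by (auto simp: card_insert_if split: if_splits)

theorem theorem2p1:
  fixes G (structure) and S :: "'a set"
  assumes "group G"
    and "finite (carrier G)"
    and "S \<subseteq> carrier G - {\<one>}"
    and "card S \<le> 4"
    and "\<exists>gs. is_ordering S gs \<and> list_prod G gs \<noteq> \<one>"
    and "\<not> (card S = 4 \<and> (\<exists>x\<in>carrier G. \<exists>y\<in>carrier G. \<exists>z\<in>carrier G.
               S = {x, inv x, y, z} \<and> x \<otimes> y \<otimes> z = \<one> \<and> inv x \<otimes> z \<otimes> y = \<one>))"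
    and "\<not> (card S = 4 \<and> (\<exists>w\<in>carrier G. \<exists>x\<in>carrier G. \<exists>y\<in>carrier G. \<exists>z\<in>carrier G.
               S = {w, x, y, z} \<and> w \<otimes> x \<otimes> y = \<one> \<and> w \<otimes> y \<otimes> z = \<one>
               \<and> w \<otimes> z \<otimes> x = \<one> \<and> x \<otimes> z \<otimes> y = \<one>))"
  shows "\<exists>gs. is_S_sequencing G S gs"
proof -
  interpret group G by fact
  obtain gs where o: "is_ordering S gs" and lp: "list_prod G gs \<noteq> \<one>" using assms(5) by blast
  have dist: "distinct gs" and sg: "set gs = S" using o unfolding is_ordering_def by auto
  have len: "length gs = card S" using distinct_card[OF dist] sg by simp
  have sub: "\<And>x. x \<in> S \<Longrightarrow> x \<in> carrier G \<and> x \<noteq> \<one>" using assms(3) by auto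
  from list_cases4[of gs] len assms(4) consider "gs = []" | p where "gs = [p]" | p q where "gs = [p,q]"
    | p q r where "gs = [p,q,r]" | p q r s where "gs = [p,q,r,s]" by auto
  then show ?thesis
  proof cases
    case 1
    then show ?thesis using lp unfolding list_prod_def by simp
  next
    case (2 p)
    then show ?thesis using seq1[of p] sub sg by auto
  next
    case (3 p q)
    then have "p \<otimes> q \<noteq> \<one>" using lp sub sg unfolding list_prod_def by auto
    then show ?thesis using seq2[of p q] sub sg dist 3 by auto
  next
    case (4 p q r)
    then have "p \<otimes> q \<otimes> r \<noteq> \<one>" using lp sub sg unfolding list_prod_def by auto
    then show ?thesis using three[of p q r] sub sg dist 4 by auto
  next
    case (5 a b c d)
    have C: "a \<in> carrier G" "b \<in> carrier G" "c \<in> carrier G" "d \<in> carrier G"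
      and N: "a \<noteq> \<one>" "b \<noteq> \<one>" "c \<noteq> \<one>" "d \<noteq> \<one>" using sub sg 5 by auto
    have D: "distinct [a,b,c,d]" using dist 5 by simp
    have P: "a \<otimes> b \<otimes> c \<otimes> d \<noteq> \<one>" using lp C 5 unfolding list_prod_def by simp
    have SS: "S = {a,b,c,d}" using sg 5 by simp
    have c4: "card S = 4" using len 5 by simp
    have "GOODS G S \<or> E1 G S \<or> E2 G S" using main4[OF C N D P] SS by simp
    moreover have "\<not> E1 G S" using assms(6) c4 unfolding E1_def by blast
    moreover have "\<not> E2 G S" using assms(7) c4 unfolding E2_def by blast
    ultimately have "GOODS G S" by blast
    then obtain p q r s where pq: "{p,q,r,s} = S" and g: "good4 G p q r s" unfolding GOODS_def by blast
    have Dp: "distinct [p,q,r,s]" using card4_distinct[of p q r s] pq c4 by simp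
    have "is_S_sequencing G {p,q,r,s} [p,q,r,s]"
      using seq4[of p q r s] Dp g sub pq by auto
    then show ?thesis using pq by auto
  qed
qed

end
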